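(* In the FRNS model, suppose the performance vector at the beginning of the last week (week 3) is $W=[2,2,0,0]$. Then for every weight vector $V=[v_1,v_2,v_3,v_4]$ with $v_1\ge v_2\ge v_3\ge v_4>0$, $P^{(1)}_{(1,1,1,1)}(3,W,V)\ge P^{(1)}_{(0,1,1,1)}(3,W,V)$; that is, $a_1$ should try to win its last game.
   Context: FRNS model: four teams $a_1,\dots,a_4$ with weights $V=[v_1,v_2,v_3,v_4]$; $p_{ij}=v_i/(v_i+v_j)$. Regular season: week 1: $a_1$ vs $a_4$, $a_2$ vs $a_3$; week 2: $a_1$ vs $a_3$, $a_2$ vs $a_4$; week 3: $a_1$ vs $a_2$, $a_3$ vs $a_4$. Teams $a_2,a_3,a_4$ always try to win; $a_1$ either tries to win or loses intentionally. If both teams try, $a_i$ beats $a_j$ with probability $p_{ij}$ (games independent); if $a_1$ loses intentionally it loses that game with probability 1. $W=[W_1,\dots,W_4]$ gives numbers of wins before week $m$. After the season teams are seeded by total wins (descending), ties broken by assigning the tied seed positions uniformly at random; knockout tournament: seed 1 vs seed 4, seed 2 vs seed 3, winners meet in the final, each tournament game won by $a_i$ over $a_j$ with probability $p_{ij}$. $P^{(1)}_{\pi}(m,W,V)$ is the probability that $a_1$ wins the tournament when, in week $m$ starting from $W$, $a_1$ tries to win ($\pi=(1,1,1,1)$) or loses intentionally ($\pi=(0,1,1,1)$). *)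

theory Defs
  imports Complex_Main
begin

text \<open>FRNS model with four teams indexed 1,2,3,4. Weights V :: nat => real,
  win records W :: nat => nat.\<close>

definition pw :: "(nat \<Rightarrow> real) \<Rightarrow> nat \<Rightarrow> nat \<Rightarrow> real" where
  "pw V i j = V i / (V i + V j)"

fun games :: "nat \<Rightarrow> (nat \<times> nat) list" where
  "games (Suc 0) = [(1,4),(2,3)]"
| "games (Suc (Suc 0)) = [(1,3),(2,4)]"
| "games (Suc (Suc (Suc 0))) = [(1,2),(3,4)]"
| "games _ = []"

text \<open>A policy pol assigns 1 (tries to win) or 0 (loses intentionally) to each team.
  Probability that i beats j in a regular-season game under policy pol.\<close>
definition gp :: "(nat \<Rightarrow> nat) \<Rightarrow> (nat \<Rightarrow> real) \<Rightarrow> nat \<Rightarrow> nat \<Rightarrow> real" where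
  "gp pol V i j = (if pol i = 0 then 0 else if pol j = 0 then 1 else pw V i j)"

definition all_try :: "nat \<Rightarrow> nat" where
  "all_try = (\<lambda>_. 1)"

definition a1_loses :: "nat \<Rightarrow> nat" where
  "a1_loses = (\<lambda>i. if i = 1 then 0 else 1)"

text \<open>Seedings consistent with the final win records (descending wins). Uniform random
  tie-breaking = uniform distribution over this set.\<close>
definition seedings :: "(nat \<Rightarrow> nat) \<Rightarrow> nat list set" where
  "seedings Wf = {s. distinct s \<and> set s = {1,2,3,4} \<and> sorted_wrt (\<lambda>x y. Wf y \<le> Wf x) s}"

text \<open>Probability that team i wins the knockout tournament with seeding s
  (seed 1 vs seed 4, seed 2 vs seed 3, winners meet in the final).\<close>
definition champ :: "(nat \<Rightarrow> real) \<Rightarrow> nat list \<Rightarrow> nat \<Rightarrow> real" where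
  "champ V s i =
    (let a = s!0; b = s!1; c = s!2; d = s!3 in
     \<Sum>x\<in>{a,d}. \<Sum>y\<in>{b,c}.
       (if x = a then pw V a d else pw V d a) * (if y = b then pw V b c else pw V c b) *
       (if i = x then pw V x y else if i = y then pw V y x else 0))"

definition tourn :: "(nat \<Rightarrow> real) \<Rightarrow> (nat \<Rightarrow> nat) \<Rightarrow> real" where
  "tourn V Wf = (\<Sum>s\<in>seedings Wf. champ V s 1) / real (card (seedings Wf))"

definition week_step ::
  "((nat \<Rightarrow> nat) \<Rightarrow> real) \<Rightarrow> (nat \<Rightarrow> nat) \<Rightarrow> (nat \<Rightarrow> real) \<Rightarrow> nat \<Rightarrow> (nat \<Rightarrow> nat) \<Rightarrow> real" where
  "week_step f pol V m W =
    (let (a,b) = games m ! 0; (c,d) = games m ! 1 in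
       gp pol V a b * gp pol V c d * f (W(a := W a + 1, c := W c + 1))
     + gp pol V a b * gp pol V d c * f (W(a := W a + 1, d := W d + 1))
     + gp pol V b a * gp pol V c d * f (W(b := W b + 1, c := W c + 1))
     + gp pol V b a * gp pol V d c * f (W(b := W b + 1, d := W d + 1)))"

fun rest :: "nat \<Rightarrow> (nat \<Rightarrow> real) \<Rightarrow> nat \<Rightarrow> (nat \<Rightarrow> nat) \<Rightarrow> real" where
  "rest 0 V m W = tourn V W"
| "rest (Suc k) V m W = week_step (rest k V (Suc m)) all_try V m W"

text \<open>P^(1)_pi(m,W,V): probability that a1 wins the tournament when week m is played
  under policy pol starting from W (later weeks: all teams try).\<close>
definition P1 :: "(nat \<Rightarrow> nat) \<Rightarrow> nat \<Rightarrow> (nat \<Rightarrow> nat) \<Rightarrow> (nat \<Rightarrow> real) \<Rightarrow> real" where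
  "P1 pol m W V = week_step (rest (3 - m) V (Suc m)) pol V m W"

end

theory Submission
  imports Defs
begin

lemma seed_form:
  assumes "s \<in> seedings Wf"
  obtains x y z w where "s = [x,y,z,w]" "x \<in> {1,2,3,4}" "y \<in> {1,2,3,4}" "z \<in> {1,2,3,4}"
     "w \<in> {1,2,3,4}" "distinct [x,y,z,w]" "{x,y,z,w} = {1,2,3,4}" "Wf y \<le> Wf x" "Wf z \<le> Wf y" "Wf w \<le> Wf z"
proof -
  from assms have d: "distinct s" and st: "set s = {1,2,3,4}" and so: "sorted_wrt (\<lambda>x y. Wf y \<le> Wf x) s"
    by (auto simp: seedings_def)
  have "length s = card (set s)" using d by (simp add: distinct_card)
  also have "\<dots> = 4" using st by simp
  finally have l: "length s = 4" .
  then obtain x y z w where s: "s = [x,y,z,w]"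
    by (auto simp: numeral_eq_Suc length_Suc_conv)
  have st': "{x,y,z,w} = {1,2,3,4}" using st s by simp
  have m: "x \<in> {1,2,3,4}" "y \<in> {1,2,3,4}" "z \<in> {1,2,3,4}" "w \<in> {1,2,3,4}"
    by (simp_all only: st'[symmetric]) blast+
  have o: "Wf y \<le> Wf x" "Wf z \<le> Wf y" "Wf w \<le> Wf z" using so s by simp_all
  show ?thesis by (rule that[OF s m d[unfolded s] st' o])
qed

lemma seed_eq:
  assumes "Wf a > Wf b" "Wf b > Wf c" "Wf c > Wf d" "distinct [a,b,c,d]" "{a,b,c,d} = {1,2,3,4}"
  shows "seedings Wf = {[a,b,c,d]}"
proof
  have "distinct [a,b,c,d]" by (rule assms(4))
  moreover have "set [a,b,c,d] = {1,2,3,4}" using assms(5) by simp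
  moreover have "sorted_wrt (\<lambda>x y. Wf y \<le> Wf x) [a,b,c,d]"
    using assms(1-3) by simp
  ultimately show "{[a,b,c,d]} \<subseteq> seedings Wf" unfolding seedings_def by blast
next
  show "seedings Wf \<subseteq> {[a,b,c,d]}"
  proof
    fix s assume sin: "s \<in> seedings Wf"
    obtain x y z w where h: "s = [x,y,z,w]" "x \<in> {1,2,3,4}" "y \<in> {1,2,3,4}" "z \<in> {1,2,3,4}"
     "w \<in> {1,2,3,4}" "distinct [x,y,z,w]" "{x,y,z,w} = {1,2,3,4}" "Wf y \<le> Wf x" "Wf z \<le> Wf y" "Wf w \<le> Wf z"
      by (rule seed_form[OF sin])
    have hs: "{x,y,z,w} = {a,b,c,d}" using h(7) assms(5) by simp
    have xs: "x \<in> {a,b,c,d}" "y \<in> {a,b,c,d}" "z \<in> {a,b,c,d}" "w \<in> {a,b,c,d}"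
      by (simp_all only: hs[symmetric]) blast+
    have as: "a \<in> {x,y,z,w}" "b \<in> {x,y,z,w}" "c \<in> {x,y,z,w}" "d \<in> {x,y,z,w}"
      by (simp_all only: hs) blast+
    have "x = a"
    proof (rule ccontr)
      assume "x \<noteq> a"
      then have "a \<in> {y,z,w}" using as(1) by blast
      then have "Wf a \<le> Wf x" using h(8-10) by auto
      moreover have "Wf x < Wf a" using xs(1) \<open>x \<noteq> a\<close> assms(1-3) by auto
      ultimately show False by simp
    qed
    have "y = b"
    proof (rule ccontr)
      assume "y \<noteq> b"
      then have "b \<in> {z,w}" using as(2) assms(4) \<open>x = a\<close> by auto
      then have "Wf b \<le> Wf y" using h(8-10) by auto
      moreover have "y \<in> {c,d}" using xs(2) \<open>y \<noteq> b\<close> h(6) \<open>x = a\<close> by auto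
      then have "Wf y < Wf b" using assms(1-3) by auto
      ultimately show False by simp
    qed
    have "z = c"
    proof (rule ccontr)
      assume "z \<noteq> c"
      then have "z = d" "w = c" using xs h(6) \<open>x = a\<close> \<open>y = b\<close> by auto
      then show False using h(10) assms(3) by simp
    qed
    have "w = d" using xs h(6) \<open>x = a\<close> \<open>y = b\<close> \<open>z = c\<close> by auto
    show "s \<in> {[a,b,c,d]}" using h(1) \<open>x = a\<close> \<open>y = b\<close> \<open>z = c\<close> \<open>w = d\<close> by simp
  qed
qed


lemma frac3:
  fixes p q r x y z k :: real
  assumes "x \<noteq> 0" "y \<noteq> 0" "z \<noteq> 0" "k \<noteq> 0"
  shows "p/x * (q/y * (r/z)) = (p*q*r*k)/(x*y*z*k)"
proof -
  have "p/x * (q/y * (r/z)) = (p*q*r)/(x*y*z)" by simp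
  also have "\<dots> = (p*q*r*k)/(x*y*z*k)" using assms(4) by (rule mult_divide_mult_cancel_right[symmetric])
  finally show ?thesis .
qed

lemma key_ineq:
  fixes a b c d :: real
  assumes "a \<ge> b" "b \<ge> c" "c \<ge> d" "d > 0"
  shows "a/(a+c) * (b/(b+d) * (a/(a+b)) + d/(d+b) * (a/(a+d)))
       \<le> a/(a+d) * (b/(b+c) * (a/(a+b)) + c/(c+b) * (a/(a+c)))"
proof -
  have pos: "a > 0" "b > 0" "c > 0" using assms by auto
  have cm: "c+b = b+c" "d+b = b+d" by simp_all
  have nz: "a+b \<noteq> 0" "a+c \<noteq> 0" "a+d \<noteq> 0" "b+c \<noteq> 0" "b+d \<noteq> 0" using pos assms(4) by auto
  define D where "D = (a+b)*(a+c)*(a+d)*(b+c)*(b+d)"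
  have Dp: "D > 0" unfolding D_def using pos assms(4) by simp
  have f1: "a/(a+d) * (b/(b+c) * (a/(a+b))) = a*a*b*((a+c)*(b+d)) / D"
    using frac3[of a b a "a+d" "b+c" "a+b" "(a+c)*(b+d)"] nz unfolding D_def by (simp add: mult_ac)
  have f2: "a/(a+d) * (c/(b+c) * (a/(a+c))) = a*a*c*((a+b)*(b+d)) / D"
    using frac3[of a c a "a+d" "b+c" "a+c" "(a+b)*(b+d)"] nz unfolding D_def by (simp add: mult_ac)
  have f3: "a/(a+c) * (b/(b+d) * (a/(a+b))) = a*a*b*((a+d)*(b+c)) / D"
    using frac3[of a b a "a+c" "b+d" "a+b" "(a+d)*(b+c)"] nz unfolding D_def by (simp add: mult_ac)
  have f4: "a/(a+c) * (d/(b+d) * (a/(a+d))) = a*a*d*((a+b)*(b+c)) / D"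
    using frac3[of a d a "a+c" "b+d" "a+d" "(a+b)*(b+c)"] nz unfolding D_def by (simp add: mult_ac)
  have N: "a*a*b*((a+d)*(b+c)) + a*a*d*((a+b)*(b+c)) \<le> a*a*b*((a+c)*(b+d)) + a*a*c*((a+b)*(b+d))"
  proof -
    have "a*a*b*((a+c)*(b+d)) + a*a*c*((a+b)*(b+d)) - (a*a*b*((a+d)*(b+c)) + a*a*d*((a+b)*(b+c)))
          = 2*(a*a)*(b*b)*(c-d)" by (simp add: algebra_simps)
    moreover have "2*(a*a)*(b*b)*(c-d) \<ge> 0" using assms by simp
    ultimately show ?thesis by linarith
  qed
  have "a*a*b*((a+d)*(b+c)) / D + a*a*d*((a+b)*(b+c)) / D \<le> a*a*b*((a+c)*(b+d)) / D + a*a*c*((a+b)*(b+d)) / D"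
    using N Dp by (simp add: add_divide_distrib[symmetric] divide_right_mono)
  then show ?thesis unfolding cm distrib_left f1 f2 f3 f4 .
qed

lemma champ1234: "champ V [a,b,c,d] a = pw V a d * (pw V b c * pw V a b + pw V c b * pw V a c)"
  if "distinct [a,b,c,d]" for a b c d :: nat
  using that by (simp add: champ_def algebra_simps)

theorem theorem3:
  fixes V :: "nat \<Rightarrow> real" and W :: "nat \<Rightarrow> nat"
  assumes "W 1 = 2" and "W 2 = 2" and "W 3 = 0" and "W 4 = 0"
    and "V 1 \<ge> V 2" and "V 2 \<ge> V 3" and "V 3 \<ge> V 4" and "V 4 > 0"
  shows "P1 all_try 3 W V \<ge> P1 a1_loses 3 W V"
proof -
  have w1: "W (Suc 0) = 2" using assms(1) by simp
  let ?W1 = "W(1 := W 1 + 1, 3 := W 3 + 1)"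
  let ?W2 = "W(1 := W 1 + 1, 4 := W 4 + 1)"
  let ?W3 = "W(2 := W 2 + 1, 3 := W 3 + 1)"
  let ?W4 = "W(2 := W 2 + 1, 4 := W 4 + 1)"
  have s1: "seedings ?W1 = {[1,2,3,4]}"
    by (rule seed_eq) (simp_all add: assms(1-4) w1 insert_commute)
  have s2: "seedings ?W2 = {[1,2,4,3]}"
    by (rule seed_eq) (simp_all add: assms(1-4) w1 insert_commute)
  have s3: "seedings ?W3 = {[2,1,3,4]}"
    by (rule seed_eq) (simp_all add: assms(1-4) w1 insert_commute)
  have s4: "seedings ?W4 = {[2,1,4,3]}"
    by (rule seed_eq) (simp_all add: assms(1-4) w1 insert_commute)
  define A where "A = pw V 1 4 * (pw V 2 3 * pw V 1 2 + pw V 3 2 * pw V 1 3)"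
  define B where "B = pw V 1 3 * (pw V 2 4 * pw V 1 2 + pw V 4 2 * pw V 1 4)"
  have t1: "tourn V ?W1 = A" unfolding tourn_def s1 A_def by (simp add: champ1234)
  have t2: "tourn V ?W2 = B" unfolding tourn_def s2 B_def by (simp add: champ1234)
  have t3: "tourn V ?W3 = B" unfolding tourn_def s3 B_def by (simp add: champ_def algebra_simps)
  have t4: "tourn V ?W4 = A" unfolding tourn_def s4 A_def by (simp add: champ_def algebra_simps)
  have g3: "games 3 = [(1,2),(3,4)]" by (simp add: numeral_eq_Suc)
  have Pt: "P1 all_try 3 W V = pw V 1 2 * pw V 3 4 * A + pw V 1 2 * pw V 4 3 * B
      + pw V 2 1 * pw V 3 4 * B + pw V 2 1 * pw V 4 3 * A"
    unfolding P1_def week_step_def g3 using t1 t2 t3 t4 by (simp add: gp_def all_try_def)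
  have Pl: "P1 a1_loses 3 W V = pw V 3 4 * B + pw V 4 3 * A"
    unfolding P1_def week_step_def g3 using t1 t2 t3 t4 by (simp add: gp_def a1_loses_def)
  have pos: "V 1 > 0" "V 2 > 0" "V 3 > 0" "V 4 > 0" using assms by auto
  have sum12: "pw V 2 1 = 1 - pw V 1 2" using pos by (simp add: pw_def field_simps)
  have sum34: "pw V 4 3 = 1 - pw V 3 4" using pos by (simp add: pw_def field_simps)
  have p12: "pw V 1 2 \<ge> 0" using pos by (simp add: pw_def)
  have p34: "pw V 3 4 \<ge> pw V 4 3" 
  proof -
    have "V 4 / (V 3 + V 4) \<le> V 3 / (V 3 + V 4)"
      using pos assms(7) by (intro divide_right_mono) auto
    then show ?thesis unfolding pw_def by (simp only: add.commute[of "V 4" "V 3"])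
  qed
  have AB: "B \<le> A" unfolding A_def B_def pw_def by (rule key_ineq[OF assms(5-8)])
  have diff: "P1 all_try 3 W V - P1 a1_loses 3 W V = pw V 1 2 * (pw V 3 4 - pw V 4 3) * (A - B)"
    unfolding Pt Pl sum12 sum34 by (simp add: algebra_simps)
  have "pw V 1 2 * (pw V 3 4 - pw V 4 3) * (A - B) \<ge> 0"
    using p12 p34 AB by (intro mult_nonneg_nonneg) auto
  then show ?thesis using diff by linarith
qed

end
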